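(* Let $G$ be a countable amenable group and $\{W_n\}$ an increasing sequence of finite subsets of $G$ with $1_G\in W_n$ such that (1) $\{W_n\}$ is a Følner sequence, and (2) for some constant $C$, each $W_n$ is individually $C$-filling. Then there exists a subsequence $\{W_{n(i)}\}$ which is filling.
   Context: Følner: $|W_n\triangle gW_n|/|W_n|\to0$ for every $g\in G$. A sequence $\{V_{n(i)}f_i\}_{i=1}^I$ of right translates of members of a sequence $\{V_n\}$ is incremental if $n(1)\ge\dots\ge n(I)$ and $f_i\notin\bigcup_{j<i}V_{n(j)}f_j$. A sequence $\{V_n\}$ with $1_G\in V_n$ is filling if for some $c>0$ every incremental sequence satisfies $|\bigcup V_{n(i)}f_i|\ge c\sum|V_{n(i)}f_i|$. A finite set $W\ni 1_G$ is individually $C$-filling if for every sequence $\{Wf_i\}$ with $f_i\notin\bigcup_{j<i}Wf_j$ one has $|\bigcup Wf_i|\ge C\sum|Wf_i|$. *)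

theory Defs
  imports "HOL-Algebra.Coset" Complex_Main "HOL-Library.Countable_Set"
begin

text \<open>Left translate g W is l_coset (g <# W); right translate V f is r_coset (V #> f).\<close>

definition folner_seq :: "('a, 'b) monoid_scheme \<Rightarrow> (nat \<Rightarrow> 'a set) \<Rightarrow> bool" where
  "folner_seq G W \<longleftrightarrow>
     (\<forall>n. finite (W n) \<and> W n \<noteq> {} \<and> W n \<subseteq> carrier G) \<and>
     (\<forall>g\<in>carrier G.
        (\<lambda>n. real (card ((W n - (g <#\<^bsub>G\<^esub> W n)) \<union> ((g <#\<^bsub>G\<^esub> W n) - W n))) / real (card (W n))) \<longlonglongrightarrow> 0)"

definition amenable_group :: "('a, 'b) monoid_scheme \<Rightarrow> bool" where
  "amenable_group G \<longleftrightarrow> (\<exists>W. folner_seq G W)"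

definition incremental ::
  "('a, 'b) monoid_scheme \<Rightarrow> (nat \<Rightarrow> 'a set) \<Rightarrow> nat \<Rightarrow> (nat \<Rightarrow> nat) \<Rightarrow> (nat \<Rightarrow> 'a) \<Rightarrow> bool" where
  "incremental G V I nn f \<longleftrightarrow>
     (\<forall>i j. i \<le> j \<longrightarrow> j < I \<longrightarrow> nn j \<le> nn i) \<and>
     (\<forall>i<I. f i \<in> carrier G \<and> f i \<notin> (\<Union>j<i. V (nn j) #>\<^bsub>G\<^esub> f j))"

definition filling :: "('a, 'b) monoid_scheme \<Rightarrow> (nat \<Rightarrow> 'a set) \<Rightarrow> bool" where
  "filling G V \<longleftrightarrow>
     (\<forall>n. \<one>\<^bsub>G\<^esub> \<in> V n) \<and>
     (\<exists>c::real. c > 0 \<and>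
        (\<forall>I nn f. incremental G V I nn f \<longrightarrow>
           real (card (\<Union>i<I. V (nn i) #>\<^bsub>G\<^esub> f i))
             \<ge> c * (\<Sum>i<I. real (card (V (nn i) #>\<^bsub>G\<^esub> f i)))))"

definition individually_filling :: "('a, 'b) monoid_scheme \<Rightarrow> real \<Rightarrow> 'a set \<Rightarrow> bool" where
  "individually_filling G C W \<longleftrightarrow>
     finite W \<and> \<one>\<^bsub>G\<^esub> \<in> W \<and>
     (\<forall>(I::nat) f. (\<forall>i<I. f i \<in> carrier G \<and> f i \<notin> (\<Union>j<i. W #>\<^bsub>G\<^esub> f j)) \<longrightarrow>
        real (card (\<Union>i<I. W #>\<^bsub>G\<^esub> f i))
          \<ge> C * (\<Sum>i<I. real (card (W #>\<^bsub>G\<^esub> f i))))"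

end

theory Submission
  imports Defs
begin

lemma indiv_sub:
  assumes IF: "individually_filling G C W" and S: "finite (S::nat set)"
    and h: "\<And>i. i \<in> S \<Longrightarrow> f i \<in> carrier G \<and> f i \<notin> (\<Union>j\<in>{j\<in>S. j < i}. W #>\<^bsub>G\<^esub> f j)"
  shows "real (card (\<Union>i\<in>S. W #>\<^bsub>G\<^esub> f i)) \<ge> C * (\<Sum>i\<in>S. real (card (W #>\<^bsub>G\<^esub> f i)))"
proof -
  define xs where "xs = sorted_list_of_set S"
  have sx: "set xs = S" and dx: "distinct xs" and sw: "sorted_wrt (<) xs"
    using S by (auto simp: xs_def)
  define g where "g k = f (xs ! k)" for k
  have bij: "bij_betw ((!) xs) {..<length xs} S"
    using bij_betw_nth[OF dx] sx by simp
  have "\<forall>i<length xs. g i \<in> carrier G \<and> g i \<notin> (\<Union>j<i. W #>\<^bsub>G\<^esub> g j)"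
  proof (intro allI impI)
    fix i assume i: "i < length xs"
    have xi: "xs ! i \<in> S" using i sx nth_mem by blast
    have "g i \<notin> W #>\<^bsub>G\<^esub> g j" if "j < i" for j
    proof -
      have "xs ! j < xs ! i" using sorted_wrt_nth_less[OF sw that i] .
      moreover have "xs ! j \<in> S" using that i sx nth_mem by (metis order.strict_trans)
      ultimately show ?thesis using h[OF xi] unfolding g_def by blast
    qed
    then show "g i \<in> carrier G \<and> g i \<notin> (\<Union>j<i. W #>\<^bsub>G\<^esub> g j)"
      using h[OF xi] g_def by auto
  qed
  then have "real (card (\<Union>i<length xs. W #>\<^bsub>G\<^esub> g i)) \<ge> C * (\<Sum>i<length xs. real (card (W #>\<^bsub>G\<^esub> g i)))"
    using IF unfolding individually_filling_def by blast
  moreover have "(\<Union>i<length xs. W #>\<^bsub>G\<^esub> g i) = (\<Union>i\<in>S. W #>\<^bsub>G\<^esub> f i)"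
    unfolding g_def using bij_betw_imp_surj_on[OF bij] by (metis image_image)
  moreover have "(\<Sum>i<length xs. real (card (W #>\<^bsub>G\<^esub> g i))) = (\<Sum>i\<in>S. real (card (W #>\<^bsub>G\<^esub> f i)))"
    unfolding g_def using sum.reindex_bij_betw[OF bij, of "\<lambda>i. real (card (W #>\<^bsub>G\<^esub> f i))"] by simp
  ultimately show ?thesis by simp
qed
definition Dset :: "('a, 'b) monoid_scheme \<Rightarrow> 'a set \<Rightarrow> 'a set \<Rightarrow> 'a set" where
  "Dset G A B = {x \<in> carrier G. x \<notin> B \<and> (\<exists>a\<in>A. a \<otimes>\<^bsub>G\<^esub> x \<in> B)}"

lemma (in group) Dset_sub: "A \<subseteq> carrier G \<Longrightarrow> Dset G A B \<subseteq> (\<Union>a\<in>A. (inv a <# B) - B)"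
proof
  fix x assume A: "A \<subseteq> carrier G" and x: "x \<in> Dset G A B"
  then obtain a where a: "a \<in> A" "a \<otimes> x \<in> B" and xc: "x \<in> carrier G" "x \<notin> B" by (auto simp: Dset_def)
  have ac: "a \<in> carrier G" using a A by auto
  have "x = inv a \<otimes> (a \<otimes> x)" using ac xc by (simp add: m_assoc[symmetric])
  then have "x \<in> inv a <# B" using a(2) unfolding l_coset_def by blast
  then show "x \<in> (\<Union>a\<in>A. (inv a <# B) - B)" using a xc by blast
qed

lemma (in group) Dset_finite: "A \<subseteq> carrier G \<Longrightarrow> finite A \<Longrightarrow> finite B \<Longrightarrow> finite (Dset G A B)"
proof -
  assume h: "A \<subseteq> carrier G" "finite A" "finite B"
  have "\<And>a. finite (inv a <# B)" using h(3) unfolding l_coset_def by auto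
  then show ?thesis using Dset_sub[OF h(1)] h(2) by (meson finite_Diff finite_UN_I finite_subset)
qed

lemma Dset_mono: "A \<subseteq> A' \<Longrightarrow> Dset G A B \<subseteq> Dset G A' B"
  unfolding Dset_def by blast

lemma folner_D:
  assumes grp: "group G" and F: "folner_seq G W" and A: "finite A" "A \<subseteq> carrier G" and e: "(\<epsilon>::real) > 0"
  shows "\<exists>n>N. real (card (Dset G A (W n))) \<le> \<epsilon> * real (card (W n))"
proof -
  interpret group G by (rule grp)
  define r where "r a n = real (card ((W n - (inv\<^bsub>G\<^esub> a <#\<^bsub>G\<^esub> W n)) \<union> ((inv\<^bsub>G\<^esub> a <#\<^bsub>G\<^esub> W n) - W n))) / real (card (W n))" for a n
  have "\<And>a. a \<in> A \<Longrightarrow> r a \<longlonglongrightarrow> 0"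
  proof -
    fix a assume a: "a \<in> A"
    have "\<forall>g\<in>carrier G. (\<lambda>n. real (card ((W n - (g <#\<^bsub>G\<^esub> W n)) \<union> ((g <#\<^bsub>G\<^esub> W n) - W n))) / real (card (W n))) \<longlonglongrightarrow> 0"
      using F unfolding folner_seq_def by blast
    moreover have "inv\<^bsub>G\<^esub> a \<in> carrier G" using a A(2) by auto
    ultimately show "r a \<longlonglongrightarrow> 0" unfolding r_def by blast
  qed
  then have "(\<lambda>n. \<Sum>a\<in>A. r a n) \<longlonglongrightarrow> 0" by (rule tendsto_null_sum)
  then have "eventually (\<lambda>n. (\<Sum>a\<in>A. r a n) < \<epsilon>) sequentially" using e by (rule order_tendstoD(2))
  then obtain M where M: "\<And>n. n \<ge> M \<Longrightarrow> (\<Sum>a\<in>A. r a n) < \<epsilon>" by (auto simp: eventually_sequentially)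
  define n where "n = max M (Suc N)"
  have nN: "n > N" and Mn: "(\<Sum>a\<in>A. r a n) < \<epsilon>" using M by (auto simp: n_def)
  have "\<forall>n. finite (W n) \<and> W n \<noteq> {} \<and> W n \<subseteq> carrier G" using F unfolding folner_seq_def by blast
  then have fin: "finite (W n)" "W n \<noteq> {}" by blast+
  then have cpos: "real (card (W n)) > 0" by (simp add: card_gt_0_iff)
  have finl: "\<And>a. finite (inv\<^bsub>G\<^esub> a <#\<^bsub>G\<^esub> W n)" using fin unfolding l_coset_def by auto
  have "card (Dset G A (W n)) \<le> card (\<Union>a\<in>A. (inv\<^bsub>G\<^esub> a <#\<^bsub>G\<^esub> W n) - W n)"
    using Dset_sub[OF A(2)] A(1) finl by (intro card_mono) auto
  also have "\<dots> \<le> (\<Sum>a\<in>A. card ((inv\<^bsub>G\<^esub> a <#\<^bsub>G\<^esub> W n) - W n))" by (rule card_UN_le[OF A(1)])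
  also have "\<dots> \<le> (\<Sum>a\<in>A. card ((W n - (inv\<^bsub>G\<^esub> a <#\<^bsub>G\<^esub> W n)) \<union> ((inv\<^bsub>G\<^esub> a <#\<^bsub>G\<^esub> W n) - W n)))"
    using finl fin by (intro sum_mono card_mono) auto
  finally have "real (card (Dset G A (W n))) \<le> (\<Sum>a\<in>A. real (card ((W n - (inv\<^bsub>G\<^esub> a <#\<^bsub>G\<^esub> W n)) \<union> ((inv\<^bsub>G\<^esub> a <#\<^bsub>G\<^esub> W n) - W n))))"
    by (simp only: of_nat_sum[symmetric] of_nat_le_iff)
  also have "\<dots> = real (card (W n)) * (\<Sum>a\<in>A. r a n)"
    unfolding r_def sum_distrib_left using cpos by simp
  also have "\<dots> \<le> \<epsilon> * real (card (W n))" using Mn cpos by simp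
  finally show ?thesis using nN by blast
qed
lemma (in group) self_in_rcos: "\<one> \<in> H \<Longrightarrow> a \<in> carrier G \<Longrightarrow> a \<in> H #> a"
  unfolding r_coset_def by force

lemma (in group) card_rcos: "H \<subseteq> carrier G \<Longrightarrow> a \<in> carrier G \<Longrightarrow> card (H #> a) = card H"
  by (metis card_rcosets_equal rcosetsI)

lemma (in group) filling_main:
  assumes V: "\<And>k. finite (V k)" "\<And>k. V k \<subseteq> carrier G" "\<And>k. \<one>\<^bsub>G\<^esub> \<in> V k"
    and IF: "\<And>k. individually_filling G C (V k)" and C: "C > 0"
    and D: "\<And>k l. l < k \<Longrightarrow> real (card (Dset G (V l) (V k))) * real (card (V l)) \<le> real (card (V k)) / (2 * (real k + 1))"
  shows "filling G V"
  unfolding filling_def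
proof (intro conjI exI[of _ "C/2"] allI impI)
  show "\<And>n. \<one> \<in> V n" by (rule V(3))
  show "C/2 > 0" using C by simp
  fix I nn f assume inc: "incremental G V I nn f"
  have mono: "\<And>i j. i \<le> j \<Longrightarrow> j < I \<Longrightarrow> nn j \<le> nn i" using inc unfolding incremental_def by blast
  have fc: "\<And>i. i < I \<Longrightarrow> f i \<in> carrier G" using inc unfolding incremental_def by blast
  have fn: "\<And>i j. j < i \<Longrightarrow> i < I \<Longrightarrow> f i \<notin> V (nn j) #> f j" using inc unfolding incremental_def by blast
  define v where "v i = real (card (V (nn i)))" for i
  have v0: "\<And>i. v i \<ge> 0" unfolding v_def by simp
  have cardv: "\<And>i. i < I \<Longrightarrow> real (card (V (nn i) #> f i)) = v i"
    unfolding v_def using card_rcos V(2) fc by simp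
  have finj: "inj_on f {..<I}"
  proof (rule inj_onI)
    fix i j assume ij: "i \<in> {..<I}" "j \<in> {..<I}" "f i = f j"
    show "i = j"
    proof (rule ccontr)
      assume "i \<noteq> j"
      then consider "i < j" | "j < i" by linarith
      then show False
      proof cases
        case 1 then show False using fn[of i j] ij self_in_rcos[OF V(3) fc[of i]] by auto
      next
        case 2 then show False using fn[of j i] ij self_in_rcos[OF V(3) fc[of j]] by auto
      qed
    qed
  qed
  define Gd where "Gd = {i. i < I \<and> (\<forall>j<i. nn j \<noteq> nn i \<longrightarrow> (V (nn i) #> f i) \<inter> (V (nn j) #> f j) = {})}"
  define Bd where "Bd = {..<I} - Gd"
  define X where "X j l = Dset G (V l) (V (nn j)) #> f j" for j l
  have bad: "\<exists>j<I. nn i < nn j \<and> f i \<in> X j (nn i)" if i: "i \<in> Bd" for i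
  proof -
    from i obtain j where iI: "i < I" and ji: "j < i" and nij: "nn j \<noteq> nn i"
      and ne: "(V (nn i) #> f i) \<inter> (V (nn j) #> f j) \<noteq> {}"
      unfolding Bd_def Gd_def by auto
    have jI: "j < I" using ji iI by simp
    have lt: "nn i < nn j" using mono[of j i] ji iI nij by simp
    from ne obtain a b where a: "a \<in> V (nn i)" and b: "b \<in> V (nn j)" and ab: "a \<otimes> f i = b \<otimes> f j"
      unfolding r_coset_def by auto
    have ac: "a \<in> carrier G" and bc: "b \<in> carrier G" using a b V(2) by auto
    have fic: "f i \<in> carrier G" and fjc: "f j \<in> carrier G" using fc iI jI by auto
    define x where "x = f i \<otimes> inv (f j)"
    have xc: "x \<in> carrier G" using fic fjc x_def by simp
    have "a \<otimes> x = (a \<otimes> f i) \<otimes> inv (f j)" using ac fic fjc x_def by (simp add: m_assoc)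
    also have "\<dots> = b" using ab bc fjc by (simp add: m_assoc)
    finally have ax: "a \<otimes> x \<in> V (nn j)" using b by simp
    have fxj: "f i = x \<otimes> f j" using fic fjc x_def by (simp add: m_assoc)
    have "x \<notin> V (nn j)"
    proof
      assume "x \<in> V (nn j)"
      then have "f i \<in> V (nn j) #> f j" using fxj unfolding r_coset_def by blast
      then show False using fn[OF ji iI] by simp
    qed
    then have "x \<in> Dset G (V (nn i)) (V (nn j))" using xc ax a unfolding Dset_def by blast
    then have "f i \<in> X j (nn i)" using fxj unfolding X_def r_coset_def by blast
    then show ?thesis using jI lt by blast
  qed
  have finX: "\<And>j l. finite (X j l)"
    unfolding X_def r_coset_def using Dset_finite V by auto
  have cardX: "\<And>j l. j < I \<Longrightarrow> card (X j l) = card (Dset G (V l) (V (nn j)))"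
    unfolding X_def using card_rcos fc by (simp add: Dset_def)
  define T where "T i j l = (if nn i = l \<and> f i \<in> X j l then v i else 0)" for i j l
  have sumBd: "(\<Sum>i\<in>Bd. v i) \<le> (\<Sum>i<I. v i) / 2"
  proof -
    have "(\<Sum>i\<in>Bd. v i) \<le> (\<Sum>i\<in>Bd. \<Sum>j<I. \<Sum>l<nn j. T i j l)"
    proof (rule sum_mono)
      fix i assume i: "i \<in> Bd"
      from bad[OF i] obtain j where j: "j < I" "nn i < nn j" "f i \<in> X j (nn i)" by blast
      have "v i = T i j (nn i)" unfolding T_def using j by simp
      also have "\<dots> \<le> (\<Sum>l<nn j. T i j l)"
        by (rule member_le_sum) (use j v0 in \<open>auto simp: T_def\<close>)
      also have "\<dots> \<le> (\<Sum>j<I. \<Sum>l<nn j. T i j l)"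
        by (rule member_le_sum[where f="\<lambda>j. \<Sum>l<nn j. T i j l"]) (use j v0 in \<open>auto simp: T_def intro!: sum_nonneg\<close>)
      finally show "v i \<le> (\<Sum>j<I. \<Sum>l<nn j. T i j l)" .
    qed
    also have "\<dots> = (\<Sum>j<I. \<Sum>l<nn j. \<Sum>i\<in>Bd. T i j l)"
      by (subst sum.swap) (simp add: sum.swap[of _ Bd])
    also have "\<dots> \<le> (\<Sum>j<I. \<Sum>l<nn j. real (card (X j l)) * real (card (V l)))"
    proof (intro sum_mono)
      fix j l
      have "(\<Sum>i\<in>Bd. T i j l) = (\<Sum>i\<in>{i\<in>Bd. nn i = l \<and> f i \<in> X j l}. v i)"
        unfolding T_def by (simp add: sum.inter_filter[symmetric] Bd_def)
      also have "\<dots> = real (card {i\<in>Bd. nn i = l \<and> f i \<in> X j l}) * real (card (V l))"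
        unfolding v_def by simp
      also have "\<dots> \<le> real (card (X j l)) * real (card (V l))"
      proof -
        have "card {i\<in>Bd. nn i = l \<and> f i \<in> X j l} \<le> card (X j l)"
          by (rule card_inj_on_le[OF _ _ finX]) (auto intro: inj_on_subset[OF finj] simp: Bd_def)
        then show ?thesis by (simp add: mult_right_mono)
      qed
      finally show "(\<Sum>i\<in>Bd. T i j l) \<le> real (card (X j l)) * real (card (V l))" .
    qed
    also have "\<dots> \<le> (\<Sum>j<I. \<Sum>l<nn j. v j / (2 * (real (nn j) + 1)))"
    proof (intro sum_mono)
      fix j l assume j: "j \<in> {..<I}" and l: "l \<in> {..<nn j}"
      show "real (card (X j l)) * real (card (V l)) \<le> v j / (2 * (real (nn j) + 1))"
        using D[of l "nn j"] l cardX[of j l] j unfolding v_def by simp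
    qed
    also have "\<dots> = (\<Sum>j<I. v j * (real (nn j) / (2 * (real (nn j) + 1))))"
      by (simp add: field_simps)
    also have "\<dots> \<le> (\<Sum>j<I. v j * (1/2))"
      by (intro sum_mono mult_left_mono v0) (simp add: field_simps)
    finally show ?thesis by (simp add: sum_divide_distrib)
  qed
  define F where "F i = V (nn i) #> f i" for i
  have finF: "\<And>i. finite (F i)" unfolding F_def r_coset_def by (simp add: V(1))
  have finGd: "finite Gd" unfolding Gd_def by auto
  have sumGd: "real (card (\<Union>i<I. F i)) \<ge> C * (\<Sum>i\<in>Gd. v i)"
  proof -
    define Gm where "Gm m = {i\<in>Gd. nn i = m}" for m
    have "(\<Union>i\<in>Gd. F i) = (\<Union>m\<in>nn ` Gd. \<Union>i\<in>Gm m. F i)" unfolding Gm_def by auto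
    then have "card (\<Union>i\<in>Gd. F i) = (\<Sum>m\<in>nn ` Gd. card (\<Union>i\<in>Gm m. F i))"
    proof (simp only:, intro card_UN_disjoint ballI impI)
      show "finite (nn ` Gd)" using finGd by simp
      fix m assume "m \<in> nn ` Gd"
      show "finite (\<Union>i\<in>Gm m. F i)" using finF finGd by (auto simp: Gm_def)
    next
      fix m1 m2 assume "m1 \<in> nn ` Gd" "m2 \<in> nn ` Gd" "m1 \<noteq> m2"
      show "(\<Union>i\<in>Gm m1. F i) \<inter> (\<Union>i\<in>Gm m2. F i) = {}"
      proof (rule ccontr)
        assume "(\<Union>i\<in>Gm m1. F i) \<inter> (\<Union>i\<in>Gm m2. F i) \<noteq> {}"
        then obtain i j where i: "i \<in> Gm m1" and j: "j \<in> Gm m2" and ne: "F i \<inter> F j \<noteq> {}" by blast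
        have nnij: "nn i \<noteq> nn j" using i j \<open>m1 \<noteq> m2\<close> unfolding Gm_def by auto
        then have "i < j \<or> j < i" by (metis linorder_neqE_nat)
        then show False
        proof
          assume ij: "i < j"
          have "j \<in> Gd" using j by (simp add: Gm_def)
          then have "\<forall>k<j. nn k \<noteq> nn j \<longrightarrow> F j \<inter> F k = {}" by (simp add: Gd_def F_def)
          then show False using ij ne nnij by auto
        next
          assume ji: "j < i"
          have "i \<in> Gd" using i by (simp add: Gm_def)
          then have "\<forall>k<i. nn k \<noteq> nn i \<longrightarrow> F i \<inter> F k = {}" by (simp add: Gd_def F_def)
          then show False using ji ne nnij by auto
        qed
      qed
    qed
    moreover have "real (card (\<Union>i\<in>Gm m. F i)) \<ge> C * (\<Sum>i\<in>Gm m. v i)" for m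
    proof -
      have "real (card (\<Union>i\<in>Gm m. V m #> f i)) \<ge> C * (\<Sum>i\<in>Gm m. real (card (V m #> f i)))"
      proof (rule indiv_sub[OF IF])
        show "finite (Gm m)" using finGd by (simp add: Gm_def)
        fix i assume i: "i \<in> Gm m"
        then have iI: "i < I" by (simp add: Gm_def Gd_def)
        have "f i \<notin> V m #> f j" if "j \<in> Gm m" "j < i" for j
          using fn[OF \<open>j < i\<close> iI] that i by (simp add: Gm_def)
        then show "f i \<in> carrier G \<and> f i \<notin> (\<Union>j\<in>{j \<in> Gm m. j < i}. V m #> f j)"
          using fc[OF iI] by blast
      qed
      moreover have "(\<Union>i\<in>Gm m. V m #> f i) = (\<Union>i\<in>Gm m. F i)" unfolding F_def Gm_def by auto
      moreover have "(\<Sum>i\<in>Gm m. real (card (V m #> f i))) = (\<Sum>i\<in>Gm m. v i)"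
        by (rule sum.cong) (auto simp: Gm_def Gd_def cardv[symmetric])
      ultimately show ?thesis by simp
    qed
    ultimately have "real (card (\<Union>i\<in>Gd. F i)) \<ge> (\<Sum>m\<in>nn ` Gd. C * (\<Sum>i\<in>Gm m. v i))"
      by (simp add: sum_mono)
    also have "(\<Sum>m\<in>nn ` Gd. C * (\<Sum>i\<in>Gm m. v i)) = C * (\<Sum>i\<in>Gd. v i)"
      unfolding sum_distrib_left[symmetric] Gm_def using sum.group[OF finGd _ subset_refl, of nn v] finGd by simp
    finally have "real (card (\<Union>i\<in>Gd. F i)) \<ge> C * (\<Sum>i\<in>Gd. v i)" .
    moreover have "card (\<Union>i\<in>Gd. F i) \<le> card (\<Union>i<I. F i)"
      by (rule card_mono) (use finF in \<open>auto simp: Gd_def\<close>)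
    ultimately show ?thesis by linarith
  qed
  have split: "(\<Sum>i<I. v i) = (\<Sum>i\<in>Gd. v i) + (\<Sum>i\<in>Bd. v i)"
  proof -
    have "Gd \<subseteq> {..<I}" unfolding Gd_def by auto
    then show ?thesis unfolding Bd_def by (metis finite_lessThan sum.subset_diff add.commute)
  qed
  have "(\<Sum>i<I. real (card (V (nn i) #> f i))) = (\<Sum>i<I. v i)" by (rule sum.cong) (auto simp: cardv)
  moreover have "C / 2 * (\<Sum>i<I. v i) \<le> real (card (\<Union>i<I. F i))"
  proof -
    have "C / 2 * (\<Sum>i<I. v i) \<le> C * (\<Sum>i\<in>Gd. v i)"
    proof -
      have "(\<Sum>i\<in>Bd. v i) \<le> (\<Sum>i\<in>Gd. v i)" using split sumBd by linarith
      then have "C * (\<Sum>i\<in>Bd. v i) \<le> C * (\<Sum>i\<in>Gd. v i)" using C by (simp add: mult_left_mono)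
      then show ?thesis using split by (simp add: algebra_simps)
    qed
    then show ?thesis using sumGd by linarith
  qed
  ultimately show "C / 2 * (\<Sum>i<I. real (card (V (nn i) #> f i))) \<le> real (card (\<Union>i<I. V (nn i) #> f i))"
    unfolding F_def by simp
qed
primrec sel :: "('a, 'b) monoid_scheme \<Rightarrow> (nat \<Rightarrow> 'a set) \<Rightarrow> nat \<Rightarrow> nat" where
  "sel G W 0 = 0"
| "sel G W (Suc k) = (SOME n. n > sel G W k \<and>
     real (card (Dset G (W (sel G W k)) (W n))) * real (card (W (sel G W k)))
       \<le> real (card (W n)) / (2 * (real (Suc k) + 1)))"

lemma sel_step:
  assumes grp: "group G" and F: "folner_seq G W" and W: "\<And>n. finite (W n)" "\<And>n. W n \<subseteq> carrier G"
  shows "sel G W (Suc k) > sel G W k \<and>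
     real (card (Dset G (W (sel G W k)) (W (sel G W (Suc k))))) * real (card (W (sel G W k)))
       \<le> real (card (W (sel G W (Suc k)))) / (2 * (real (Suc k) + 1))"
proof -
  define A where "A = W (sel G W k)"
  define e where "e = 1 / ((2 * (real (Suc k) + 1)) * (real (card A) + 1))"
  have e: "e > 0" unfolding e_def by simp
  obtain n where n: "n > sel G W k" and nD: "real (card (Dset G A (W n))) \<le> e * real (card (W n))"
    using folner_D[OF grp F _ _ e, of A "sel G W k"] W unfolding A_def by blast
  have "real (card (Dset G A (W n))) * real (card A) \<le> e * real (card (W n)) * real (card A)"
    using nD by (simp add: mult_right_mono)
  also have "\<dots> = real (card (W n)) / (2 * (real (Suc k) + 1)) * (real (card A) / (real (card A) + 1))"
    unfolding e_def by (simp add: field_simps)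
  also have "\<dots> \<le> real (card (W n)) / (2 * (real (Suc k) + 1))"
    by (rule mult_left_le) (auto simp: field_simps)
  finally have "\<exists>n. n > sel G W k \<and> real (card (Dset G A (W n))) * real (card A)
       \<le> real (card (W n)) / (2 * (real (Suc k) + 1))" using n by blast
  then show ?thesis unfolding A_def sel.simps by (rule someI_ex)
qed

theorem lemma2p2:
  fixes G :: "('a, 'b) monoid_scheme" and W :: "nat \<Rightarrow> 'a set" and C :: real
  assumes "group G" and "countable (carrier G)" and "amenable_group G"
    and "\<And>n. finite (W n)" and "\<And>n. W n \<subseteq> carrier G" and "\<And>n. \<one>\<^bsub>G\<^esub> \<in> W n"
    and "incseq W"
    and "folner_seq G W"
    and "C > 0" and "\<And>n. individually_filling G C (W n)"
  shows "\<exists>\<sigma>. strict_mono \<sigma> \<and> filling G (W \<circ> \<sigma>)"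
proof -
  interpret group G by (rule assms(1))
  define \<sigma> where "\<sigma> = sel G W"
  have step: "\<And>k. \<sigma> (Suc k) > \<sigma> k \<and>
     real (card (Dset G (W (\<sigma> k)) (W (\<sigma> (Suc k))))) * real (card (W (\<sigma> k)))
       \<le> real (card (W (\<sigma> (Suc k)))) / (2 * (real (Suc k) + 1))"
    unfolding \<sigma>_def using sel_step[OF assms(1) assms(8) assms(4) assms(5)] by blast
  have sm: "strict_mono \<sigma>" using step by (simp add: strict_mono_Suc_iff)
  have fill: "filling G (W \<circ> \<sigma>)"
  proof (rule filling_main)
    show "\<And>k. finite ((W \<circ> \<sigma>) k)" "\<And>k. (W \<circ> \<sigma>) k \<subseteq> carrier G" "\<And>k. \<one>\<^bsub>G\<^esub> \<in> (W \<circ> \<sigma>) k"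
      "\<And>k. individually_filling G C ((W \<circ> \<sigma>) k)" using assms by auto
    show "C > 0" by (rule assms(9))
    fix k l :: nat assume lk: "l < k"
    then obtain k0 where k0: "k = Suc k0" and lk0: "l \<le> k0" by (metis less_Suc_eq_le less_imp_Suc_add)
    have sub: "W (\<sigma> l) \<subseteq> W (\<sigma> k0)"
      using assms(7) sm lk0 by (simp add: incseqD strict_mono_less_eq)
    have c1: "card (W (\<sigma> l)) \<le> card (W (\<sigma> k0))" using sub assms(4) by (simp add: card_mono)
    have c2: "card (Dset G (W (\<sigma> l)) (W (\<sigma> k))) \<le> card (Dset G (W (\<sigma> k0)) (W (\<sigma> k)))"
      by (rule card_mono[OF Dset_finite Dset_mono[OF sub]]) (use assms(4,5) in auto)
    have "real (card (Dset G (W (\<sigma> l)) (W (\<sigma> k)))) * real (card (W (\<sigma> l)))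
        \<le> real (card (Dset G (W (\<sigma> k0)) (W (\<sigma> k)))) * real (card (W (\<sigma> k0)))"
      using c1 c2 by (simp add: mult_mono)
    also have "\<dots> \<le> real (card (W (\<sigma> k))) / (2 * (real k + 1))" using step[of k0] k0 by simp
    finally show "real (card (Dset G ((W \<circ> \<sigma>) l) ((W \<circ> \<sigma>) k))) * real (card ((W \<circ> \<sigma>) l))
        \<le> real (card ((W \<circ> \<sigma>) k)) / (2 * (real k + 1))" by simp
  qed
  show ?thesis using sm fill by blast
qed

end
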